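(* Let $n\ge3$ and suppose $T=T_\lambda(r,m)$ acts linearly and inner faithfully on $\Bbbk\overline{Q}$ so that $g$ acts by a rotation: $g\cdot e_i=e_{i+d}$, $g\cdot a_i=\mu_ia_{i+d}$, $g\cdot a_i^*=\mu_i^*a^*_{i+d}$ for some integer $0<d\le n-1$ and $\mu_i,\mu_i^*\in\Bbbk^\times$. Let $\sigma$ be the quiver-Taft map of the action. Then there exist $c_0,c_1,c_0^*,c_1^*\in\Bbbk$ such that for all $0\le i\le n-1$ (empty products being $1$): $$\sigma(a_i)=\begin{cases}\lambda^{i/2}\frac{\mu_i\mu_{i-2}\cdots\mu_2}{\mu^*_{i-1}\mu^*_{i-3}\cdots\mu^*_1}c_0a^*_{i-1} & d=n-2,\ i\text{ even},\\ \lambda^{(i-1)/2}\frac{\mu_i\mu_{i-2}\cdots\mu_3}{\mu^*_{i-1}\mu^*_{i-3}\cdots\mu^*_2}c_1a^*_{i-1} & d=n-2,\ i\text{ odd},\\ \lambda^i(\mu_i\mu_{i-1}\cdots\mu_1)c_0e_i & d=n-1,\\ 0 & d\ne n-1,n-2,\end{cases}$$ $$\sigma(a_i^* )=\begin{cases}\lambda^{-i/2}\frac{\mu_{i-1}\mu_{i-3}\cdots\mu_1}{\mu^*_{i-2}\mu^*_{i-4}\cdots\mu^*_0}c_0^*a_{i+1} & d=2,\ i\text{ even},\\ \lambda^{-(i-1)/2}\frac{\mu_{i-1}\mu_{i-3}\cdots\mu_2}{\mu^*_{i-2}\mu^*_{i-4}\cdots\mu^*_1}c_1^*a_{i+1}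 & d=2,\ i\text{ odd},\\ (\lambda^i\mu^*_{i-1}\mu^*_{i-2}\cdots\mu^*_0)^{-1}c_0^*e_{i+1} & d=1,\\ 0 & d\neq1,2.\end{cases}$$
   Context: Let $\Bbbk$ be a field, $r>1$ and $m$ positive integers with $r\mid m$, and $\lambda\in\Bbbk$ a primitive $r$-th root of unity, with $r$ coprime to the characteristic of $\Bbbk$. The generalized Taft algebra $T=T_\lambda(r,m)$ is the Hopf algebra generated by $g,x$ with relations $gx=\lambda xg$, $g^m=1$, $x^r=0$, $\Delta(g)=g\otimes g$, $\Delta(x)=1\otimes x+x\otimes g$, $\varepsilon(g)=1,\varepsilon(x)=0$, $S(g)=g^{-1}$, $S(x)=-xg^{-1}$. An action of $T$ on an algebra $A$ is a $T$-module algebra structure; so $g$ acts by an algebra automorphism and $x\cdot(ab)=a(x\cdot b)+(x\cdot a)(g\cdot b)$. It is inner faithful if no nonzero Hopf ideal $I$ of $T$ satisfies $I\cdot A=0$. Vertex indices are taken modulo $n$. $\overline{Q}$ has vertices $0,\dots,n-1$ and arrows $a_i:i\to i+1$, $a_i^*:i+1\to i$; in $\Bbbk\overline{Q}$, $e_i$ is the trivial path at $i$, $s(a),t(a)$ source and target, and $pq$ is concatenation ($p$ then $q$) if $t(p)=s(q)$, else $0$. A linear action: $g$ acts by a path-length-preserving automorphism ($g\cdot e_i=e_{g\cdot i}$) and $x$ maps vertices into the span of vertices and arrows into the span of vertices and arrows. Then there are scalars $\gamma_i$ with $x\cdot e_i=\gamma_ie_i-\gamma_i\lambda^{-1}e_{g\cdot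 i}$; the quiver-Taft map $\sigma$ is the linear map on the span of vertices and arrows with $\sigma(e_i)=0$ and $\sigma(a)=x\cdot a-\gamma_{t(a)}a+\gamma_{s(a)}\lambda^{-1}(g\cdot a)$ for arrows $a$. (It satisfies $\sigma(a)=e_{s(a)}\sigma(a)e_{g\cdot t(a)}$ and $\sigma(g\cdot a)=\lambda^{-1}g\cdot\sigma(a)$.) *)

theory Defs
  imports Main
begin

text \<open>Arrows of the double cyclic quiver on vertices 0..n-1: (i,True) is a_i : i -> i+1,
  (i,False) is a_i^* : i+1 -> i (vertex indices mod n).\<close>

type_synonym arrow = "nat \<times> bool"
type_synonym qpath = "nat \<times> arrow list"

definition asrc :: "nat \<Rightarrow> arrow \<Rightarrow> nat" where
  "asrc n a = (if snd a then fst a else (fst a + 1) mod n)"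

definition atgt :: "nat \<Rightarrow> arrow \<Rightarrow> nat" where
  "atgt n a = (if snd a then (fst a + 1) mod n else fst a)"

fun walk :: "nat \<Rightarrow> nat \<Rightarrow> arrow list \<Rightarrow> bool" where
  "walk n v [] = True"
| "walk n v (a # as) = (fst a < n \<and> asrc n a = v \<and> walk n (atgt n a) as)"

fun endv :: "nat \<Rightarrow> nat \<Rightarrow> arrow list \<Rightarrow> nat" where
  "endv n v [] = v"
| "endv n v (a # as) = endv n (atgt n a) as"

definition valid_path :: "nat \<Rightarrow> qpath \<Rightarrow> bool" where
  "valid_path n p = (fst p < n \<and> walk n (fst p) (snd p))"

definition ptgt :: "nat \<Rightarrow> qpath \<Rightarrow> nat" where
  "ptgt n p = endv n (fst p) (snd p)"

definition supp :: "('b \<Rightarrow> 'k::zero) \<Rightarrow> 'b set" where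
  "supp f = {p. f p \<noteq> 0}"

definition PA :: "nat \<Rightarrow> (qpath \<Rightarrow> 'k::field) set" where
  "PA n = {f. finite (supp f) \<and> (\<forall>p. f p \<noteq> 0 \<longrightarrow> valid_path n p)}"

definition pmul :: "nat \<Rightarrow> (qpath \<Rightarrow> 'k::field) \<Rightarrow> (qpath \<Rightarrow> 'k) \<Rightarrow> (qpath \<Rightarrow> 'k)" where
  "pmul n f h = (\<lambda>w. \<Sum>pq \<in> {(p,q). p \<in> supp f \<and> q \<in> supp h \<and> ptgt n p = fst q
        \<and> (fst p, snd p @ snd q) = w}. f (fst pq) * h (snd pq))"

definition padd :: "(qpath \<Rightarrow> 'k::field) \<Rightarrow> (qpath \<Rightarrow> 'k) \<Rightarrow> (qpath \<Rightarrow> 'k)" where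
  "padd f h = (\<lambda>w. f w + h w)"

definition psmult :: "'k::field \<Rightarrow> (qpath \<Rightarrow> 'k) \<Rightarrow> (qpath \<Rightarrow> 'k)" where
  "psmult c f = (\<lambda>w. c * f w)"

definition bvec :: "'a \<Rightarrow> 'a \<Rightarrow> 'k::field" where
  "bvec p = (\<lambda>q. if q = p then 1 else 0)"

definition vert :: "nat \<Rightarrow> qpath \<Rightarrow> 'k::field" where
  "vert i = bvec (i, [])"

definition arrel :: "nat \<Rightarrow> arrow \<Rightarrow> qpath \<Rightarrow> 'k::field" where
  "arrel n a = bvec (asrc n a, [a])"

definition arrA :: "nat \<Rightarrow> nat \<Rightarrow> qpath \<Rightarrow> 'k::field" where
  "arrA n i = arrel n (i, True)"

definition arrS :: "nat \<Rightarrow> nat \<Rightarrow> qpath \<Rightarrow> 'k::field" where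
  "arrS n i = arrel n (i, False)"

definition punit :: "nat \<Rightarrow> qpath \<Rightarrow> 'k::field" where
  "punit n = (\<lambda>w. if snd w = [] \<and> fst w < n then 1 else 0)"

definition plen :: "nat \<Rightarrow> nat \<Rightarrow> (qpath \<Rightarrow> 'k::field) set" where
  "plen n l = {f \<in> PA n. \<forall>p. f p \<noteq> 0 \<longrightarrow> length (snd p) = l}"

definition ple1 :: "nat \<Rightarrow> (qpath \<Rightarrow> 'k::field) set" where
  "ple1 n = {f \<in> PA n. \<forall>p. f p \<noteq> 0 \<longrightarrow> length (snd p) \<le> 1}"

text \<open>A T-module algebra structure on the path algebra, given by the k-linear operators
  G (action of g) and X (action of x); these respect the defining relations of T and
  the module-algebra axioms for the generators (which determine the whole structure).\<close>
definition taft_module_algebra ::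
  "nat \<Rightarrow> 'k::field \<Rightarrow> nat \<Rightarrow> nat \<Rightarrow> ((qpath \<Rightarrow> 'k) \<Rightarrow> (qpath \<Rightarrow> 'k))
     \<Rightarrow> ((qpath \<Rightarrow> 'k) \<Rightarrow> (qpath \<Rightarrow> 'k)) \<Rightarrow> bool" where
  "taft_module_algebra n lam r m G X \<longleftrightarrow>
     (\<forall>f\<in>PA n. G f \<in> PA n \<and> X f \<in> PA n) \<and>
     (\<forall>f\<in>PA n. \<forall>h\<in>PA n. G (padd f h) = padd (G f) (G h) \<and> X (padd f h) = padd (X f) (X h)) \<and>
     (\<forall>c. \<forall>f\<in>PA n. G (psmult c f) = psmult c (G f) \<and> X (psmult c f) = psmult c (X f)) \<and>
     (\<forall>f\<in>PA n. (G ^^ m) f = f \<and> (X ^^ r) f = (\<lambda>_. 0) \<and> G (X f) = psmult lam (X (G f))) \<and>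
     G (punit n) = punit n \<and> X (punit n) = (\<lambda>_. 0) \<and>
     (\<forall>f\<in>PA n. \<forall>h\<in>PA n. G (pmul n f h) = pmul n (G f) (G h) \<and>
         X (pmul n f h) = padd (pmul n f (X h)) (pmul n (X f) (G h)))"

text \<open>Elements of T are coefficient functions on the basis g^j x^k, j<m, k<r;
  elements of T (x) T are coefficient functions on pairs of basis indices.\<close>
definition tbasis :: "nat \<Rightarrow> nat \<Rightarrow> (nat \<times> nat) set" where
  "tbasis m r = {..<m} \<times> {..<r}"

definition Tcar :: "nat \<Rightarrow> nat \<Rightarrow> (nat \<times> nat \<Rightarrow> 'k::field) set" where
  "Tcar m r = {t. \<forall>p. t p \<noteq> 0 \<longrightarrow> p \<in> tbasis m r}"

text \<open>(g^a x^b)(g^c x^d) = lambda^(-bc) g^(a+c) x^(b+d).\<close>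
definition tmul :: "'k::field \<Rightarrow> nat \<Rightarrow> nat \<Rightarrow> (nat \<times> nat \<Rightarrow> 'k) \<Rightarrow> (nat \<times> nat \<Rightarrow> 'k)
    \<Rightarrow> (nat \<times> nat \<Rightarrow> 'k)" where
  "tmul lam m r s t = (\<lambda>z. if z \<in> tbasis m r then
      (\<Sum>pq \<in> tbasis m r \<times> tbasis m r.
         if (fst (fst pq) + fst (snd pq)) mod m = fst z \<and> snd (fst pq) + snd (snd pq) = snd z
         then inverse (lam ^ (snd (fst pq) * fst (snd pq))) * s (fst pq) * t (snd pq) else 0)
      else 0)"

definition tpow :: "'k::field \<Rightarrow> nat \<Rightarrow> nat \<Rightarrow> (nat \<times> nat \<Rightarrow> 'k) \<Rightarrow> nat \<Rightarrow> (nat \<times> nat \<Rightarrow> 'k)" where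
  "tpow lam m r t k = (tmul lam m r t ^^ k) (bvec (0,0))"

definition tmul2 :: "'k::field \<Rightarrow> nat \<Rightarrow> nat
    \<Rightarrow> ((nat \<times> nat) \<times> (nat \<times> nat) \<Rightarrow> 'k) \<Rightarrow> ((nat \<times> nat) \<times> (nat \<times> nat) \<Rightarrow> 'k)
    \<Rightarrow> ((nat \<times> nat) \<times> (nat \<times> nat) \<Rightarrow> 'k)" where
  "tmul2 lam m r P Q = (\<lambda>z.
      \<Sum>pq \<in> tbasis m r \<times> tbasis m r. \<Sum>pq' \<in> tbasis m r \<times> tbasis m r.
         P pq * Q pq' * tmul lam m r (bvec (fst pq)) (bvec (fst pq')) (fst z)
                      * tmul lam m r (bvec (snd pq)) (bvec (snd pq')) (snd z))"

definition tpow2 :: "'k::field \<Rightarrow> nat \<Rightarrow> nat \<Rightarrow> ((nat \<times> nat) \<times> (nat \<times> nat) \<Rightarrow> 'k) \<Rightarrow> nat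
    \<Rightarrow> ((nat \<times> nat) \<times> (nat \<times> nat) \<Rightarrow> 'k)" where
  "tpow2 lam m r P k = (tmul2 lam m r P ^^ k) (bvec ((0,0),(0,0)))"

text \<open>Delta(g) = g (x) g, Delta(x) = 1 (x) x + x (x) g, extended multiplicatively and linearly.\<close>
definition tcomult :: "'k::field \<Rightarrow> nat \<Rightarrow> nat \<Rightarrow> (nat \<times> nat \<Rightarrow> 'k)
    \<Rightarrow> ((nat \<times> nat) \<times> (nat \<times> nat) \<Rightarrow> 'k)" where
  "tcomult lam m r t = (\<lambda>z. \<Sum>p \<in> tbasis m r. t p *
      tmul2 lam m r (tpow2 lam m r (bvec ((1,0),(1,0))) (fst p))
        (tpow2 lam m r (\<lambda>y. bvec ((0,0),(0,1)) y + bvec ((0,1),(1,0)) y) (snd p)) z)"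

definition tcounit :: "nat \<Rightarrow> (nat \<times> nat \<Rightarrow> 'k::field) \<Rightarrow> 'k" where
  "tcounit m t = (\<Sum>j<m. t (j, 0))"

text \<open>S(g^j x^k) = S(x)^k S(g)^j with S(g) = g^(m-1), S(x) = - x g^(m-1).\<close>
definition tanti :: "'k::field \<Rightarrow> nat \<Rightarrow> nat \<Rightarrow> (nat \<times> nat \<Rightarrow> 'k) \<Rightarrow> (nat \<times> nat \<Rightarrow> 'k)" where
  "tanti lam m r t = (\<lambda>z. \<Sum>p \<in> tbasis m r. t p *
      tmul lam m r
        (tpow lam m r (\<lambda>y. - tmul lam m r (bvec (0,1)) (bvec (m - 1, 0)) y) (snd p))
        (tpow lam m r (bvec (m - 1, 0)) (fst p)) z)"

definition tensor_sum :: "(nat \<times> nat \<Rightarrow> 'k::field) set \<Rightarrow> (nat \<times> nat \<Rightarrow> 'k) set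
    \<Rightarrow> ((nat \<times> nat) \<times> (nat \<times> nat) \<Rightarrow> 'k) set" where
  "tensor_sum I T = {P. \<exists>(N::nat) u v. (\<forall>k<N. (u k \<in> I \<and> v k \<in> T) \<or> (u k \<in> T \<and> v k \<in> I)) \<and>
        P = (\<lambda>z. \<Sum>k<N. u k (fst z) * v k (snd z))}"

definition hopf_ideal :: "'k::field \<Rightarrow> nat \<Rightarrow> nat \<Rightarrow> (nat \<times> nat \<Rightarrow> 'k) set \<Rightarrow> bool" where
  "hopf_ideal lam m r I \<longleftrightarrow>
     I \<subseteq> Tcar m r \<and> (\<lambda>_. 0) \<in> I \<and>
     (\<forall>s\<in>I. \<forall>t\<in>I. (\<lambda>z. s z + t z) \<in> I) \<and>
     (\<forall>s\<in>Tcar m r. \<forall>t\<in>I. tmul lam m r s t \<in> I \<and> tmul lam m r t s \<in> I) \<and>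
     (\<forall>t\<in>I. tcounit m t = 0) \<and>
     (\<forall>t\<in>I. tcomult lam m r t \<in> tensor_sum I (Tcar m r)) \<and>
     (\<forall>t\<in>I. tanti lam m r t \<in> I)"

definition tact :: "nat \<Rightarrow> nat \<Rightarrow> ((qpath \<Rightarrow> 'k::field) \<Rightarrow> (qpath \<Rightarrow> 'k))
    \<Rightarrow> ((qpath \<Rightarrow> 'k) \<Rightarrow> (qpath \<Rightarrow> 'k)) \<Rightarrow> (nat \<times> nat \<Rightarrow> 'k) \<Rightarrow> (qpath \<Rightarrow> 'k) \<Rightarrow> (qpath \<Rightarrow> 'k)" where
  "tact m r G X t f = (\<lambda>w. \<Sum>p \<in> tbasis m r. t p * (G ^^ fst p) ((X ^^ snd p) f) w)"

definition inner_faithful :: "nat \<Rightarrow> 'k::field \<Rightarrow> nat \<Rightarrow> nat \<Rightarrow> ((qpath \<Rightarrow> 'k) \<Rightarrow> (qpath \<Rightarrow> 'k))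
    \<Rightarrow> ((qpath \<Rightarrow> 'k) \<Rightarrow> (qpath \<Rightarrow> 'k)) \<Rightarrow> bool" where
  "inner_faithful n lam r m G X \<longleftrightarrow>
     \<not> (\<exists>I. hopf_ideal lam m r I \<and> (\<exists>t\<in>I. t \<noteq> (\<lambda>_. 0)) \<and>
            (\<forall>t\<in>I. \<forall>f\<in>PA n. tact m r G X t f = (\<lambda>_. 0)))"

text \<open>gamma_j is the coefficient of e_j in x . e_j (for g.j /= j this is the scalar
  with x.e_j = gamma_j e_j - gamma_j lambda^-1 e_(g.j)).\<close>
definition qgamma :: "((qpath \<Rightarrow> 'k::field) \<Rightarrow> (qpath \<Rightarrow> 'k)) \<Rightarrow> nat \<Rightarrow> 'k" where
  "qgamma X j = X (vert j) (j, [])"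

definition qtaft_sigma :: "nat \<Rightarrow> 'k::field \<Rightarrow> ((qpath \<Rightarrow> 'k) \<Rightarrow> (qpath \<Rightarrow> 'k))
    \<Rightarrow> ((qpath \<Rightarrow> 'k) \<Rightarrow> (qpath \<Rightarrow> 'k)) \<Rightarrow> arrow \<Rightarrow> (qpath \<Rightarrow> 'k)" where
  "qtaft_sigma n lam G X a = (\<lambda>w. X (arrel n a) w - qgamma X (atgt n a) * arrel n a w
       + qgamma X (asrc n a) * inverse lam * G (arrel n a) w)"

end

theory Submission
  imports Defs
begin
lemma mod_sum: "(a::nat) < n \<Longrightarrow> b < n \<Longrightarrow> (a + b) mod n = (if a + b < n then a + b else a + b - n)"
  by (simp add: le_mod_geq)

lemma mod_suc: "(a::nat) < n \<Longrightarrow> Suc a mod n = (if Suc a < n then Suc a else 0)"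
proof -
  assume "a < n"
  then have "Suc a < n \<or> Suc a = n" by auto
  then show ?thesis by auto
qed

lemmas modr = mod_sum mod_suc

lemma arA_vert: "(i::nat) < n \<Longrightarrow> 0 < d \<Longrightarrow> d < n \<Longrightarrow> i = ((i+1) mod n + d) mod n \<Longrightarrow> d = n - 1"
  by (simp add: modr split: if_splits)

lemma ar_self: "(x::nat) < n \<Longrightarrow> 0 < d \<Longrightarrow> d < n \<Longrightarrow> x = (x + d) mod n \<Longrightarrow> False"
  by (simp add: mod_sum split: if_splits)

lemma pred_inv: "(j::nat) < n \<Longrightarrow> (j+1) mod n = i \<Longrightarrow> j = (i + n - 1) mod n"
proof -
  assume a: "j < n" "(j+1) mod n = i"
  show ?thesis
  proof (cases "j + 1 < n")
    case True
    then have "i = j + 1" using a by simp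
    then show ?thesis using a by simp
  next
    case False
    then have "j + 1 = n" using a by simp
    then have "i = 0" using a by auto
    then show ?thesis using \<open>j+1 = n\<close> by simp
  qed
qed

lemma arA_F: "(j::nat) < n \<Longrightarrow> i < n \<Longrightarrow> 0 < d \<Longrightarrow> d < n \<Longrightarrow> 3 \<le> n \<Longrightarrow> (j+1) mod n = i
   \<Longrightarrow> j = ((i+1) mod n + d) mod n \<Longrightarrow> d = n - 2 \<and> j = (i + n - 1) mod n"
  apply (rule conjI)
   apply (simp add: modr split: if_splits)
  apply (erule (1) pred_inv)
  done

lemma arS_vert: "(i::nat) < n \<Longrightarrow> 0 < d \<Longrightarrow> d < n \<Longrightarrow> (i+1) mod n = (i + d) mod n \<Longrightarrow> d = 1"
  by (simp add: modr split: if_splits)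

lemma arS_T: "(i::nat) < n \<Longrightarrow> 0 < d \<Longrightarrow> d < n \<Longrightarrow> 3 \<le> n \<Longrightarrow> ((i+1) mod n + 1) mod n = (i + d) mod n \<Longrightarrow> d = 2"
  by (simp add: modr split: if_splits)

lemma arS_F: "(i::nat) < n \<Longrightarrow> j < n \<Longrightarrow> (j+1) mod n = (i+1) mod n \<Longrightarrow> j = i"
  by (simp add: modr split: if_splits)

lemma pred_id: "0 < n \<Longrightarrow> (k::nat) < n \<Longrightarrow> ((k + n - 1) mod n + 1) mod n = k"
  apply (cases "k = 0")
  apply (simp_all add: le_mod_geq)
  done

lemma supp_bvec[simp]: "supp (bvec p :: _ \<Rightarrow> 'k::field) = {p}"
  by (auto simp: supp_def bvec_def)

lemma ptgt_nil[simp]: "ptgt n (v, []) = v"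
  by (simp add: ptgt_def)

lemma ptgt_single[simp]: "ptgt n (v, [b]) = atgt n b"
  by (simp add: ptgt_def)

lemma pmul_left0:
  fixes V h :: "qpath \<Rightarrow> 'k::field"
  assumes V0: "\<forall>p. V p \<noteq> 0 \<longrightarrow> snd p = []"
  shows "pmul n V h w = V (fst w, []) * h w"
proof -
  have S: "{(p,q). p \<in> supp V \<and> q \<in> supp h \<and> ptgt n p = fst q \<and> (fst p, snd p @ snd q) = w}
      = (if V (fst w, []) \<noteq> 0 \<and> h w \<noteq> 0 then {((fst w, []), w)} else {})"
  proof (rule set_eqI)
    fix x :: "qpath \<times> qpath"
    obtain p q where x: "x = (p, q)" by (cases x)
    obtain a b where p: "p = (a, b)" by (cases p)
    obtain c e where q: "q = (c, e)" by (cases q)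
    show "x \<in> {(p,q). p \<in> supp V \<and> q \<in> supp h \<and> ptgt n p = fst q \<and> (fst p, snd p @ snd q) = w}
      \<longleftrightarrow> x \<in> (if V (fst w, []) \<noteq> 0 \<and> h w \<noteq> 0 then {((fst w, []), w)} else {})"
    proof
      assume "x \<in> {(p,q). p \<in> supp V \<and> q \<in> supp h \<and> ptgt n p = fst q \<and> (fst p, snd p @ snd q) = w}"
      then have h1: "V (a,b) \<noteq> 0" "h (c,e) \<noteq> 0" "ptgt n (a,b) = c" "(a, b @ e) = w"
        by (auto simp: x p q supp_def)
      then have "b = []" using V0 by fastforce
      then show "x \<in> (if V (fst w, []) \<noteq> 0 \<and> h w \<noteq> 0 then {((fst w, []), w)} else {})"
        using h1 by (auto simp: x p q)
    next
      assume "x \<in> (if V (fst w, []) \<noteq> 0 \<and> h w \<noteq> 0 then {((fst w, []), w)} else {})"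
      then show "x \<in> {(p,q). p \<in> supp V \<and> q \<in> supp h \<and> ptgt n p = fst q \<and> (fst p, snd p @ snd q) = w}"
        by (cases w) (auto simp: supp_def split: if_splits)
    qed
  qed
  show ?thesis by (simp add: pmul_def S)
qed

lemma pmul_right0:
  fixes V h :: "qpath \<Rightarrow> 'k::field"
  assumes V0: "\<forall>p. V p \<noteq> 0 \<longrightarrow> snd p = []"
  shows "pmul n h V w = h w * V (ptgt n w, [])"
proof -
  have S: "{(p,q). p \<in> supp h \<and> q \<in> supp V \<and> ptgt n p = fst q \<and> (fst p, snd p @ snd q) = w}
      = (if h w \<noteq> 0 \<and> V (ptgt n w, []) \<noteq> 0 then {(w, (ptgt n w, []))} else {})"
  proof (rule set_eqI)
    fix x :: "qpath \<times> qpath"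
    obtain p q where x: "x = (p, q)" by (cases x)
    obtain a b where p: "p = (a, b)" by (cases p)
    obtain c e where q: "q = (c, e)" by (cases q)
    show "x \<in> {(p,q). p \<in> supp h \<and> q \<in> supp V \<and> ptgt n p = fst q \<and> (fst p, snd p @ snd q) = w}
      \<longleftrightarrow> x \<in> (if h w \<noteq> 0 \<and> V (ptgt n w, []) \<noteq> 0 then {(w, (ptgt n w, []))} else {})"
    proof
      assume "x \<in> {(p,q). p \<in> supp h \<and> q \<in> supp V \<and> ptgt n p = fst q \<and> (fst p, snd p @ snd q) = w}"
      then have h1: "h (a,b) \<noteq> 0" "V (c,e) \<noteq> 0" "ptgt n (a,b) = c" "(a, b @ e) = w"
        by (auto simp: x p q supp_def)
      then have "e = []" using V0 by fastforce
      then show "x \<in> (if h w \<noteq> 0 \<and> V (ptgt n w, []) \<noteq> 0 then {(w, (ptgt n w, []))} else {})"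
        using h1 by (auto simp: x p q)
    next
      assume "x \<in> (if h w \<noteq> 0 \<and> V (ptgt n w, []) \<noteq> 0 then {(w, (ptgt n w, []))} else {})"
      then show "x \<in> {(p,q). p \<in> supp h \<and> q \<in> supp V \<and> ptgt n p = fst q \<and> (fst p, snd p @ snd q) = w}"
        by (cases w) (auto simp: supp_def split: if_splits)
    qed
  qed
  show ?thesis by (simp add: pmul_def S)
qed

lemma vert_len0: "\<forall>p. (vert i :: qpath \<Rightarrow> 'k::field) p \<noteq> 0 \<longrightarrow> snd p = []"
  by (simp add: vert_def bvec_def)

lemma vert_app: "(vert i :: qpath \<Rightarrow> 'k::field) w = (if w = (i, []) then 1 else 0)"
  by (simp add: vert_def bvec_def)

lemma pmul_vert_left: "pmul n (vert i) (h :: qpath \<Rightarrow> 'k::field) w = (if fst w = i then h w else 0)"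
  by (simp add: pmul_left0[OF vert_len0] vert_app)

lemma pmul_vert_right: "pmul n (h :: qpath \<Rightarrow> 'k::field) (vert i) w = (if ptgt n w = i then h w else 0)"
  by (simp add: pmul_right0[OF vert_len0] vert_app)

lemma arrel_app: "(arrel n a :: qpath \<Rightarrow> 'k::field) w = (if w = (asrc n a, [a]) then 1 else 0)"
  by (simp add: arrel_def bvec_def)

lemma asrc_lt: "0 < n \<Longrightarrow> fst a < n \<Longrightarrow> asrc n a < n"
  by (simp add: asrc_def)
lemma atgt_lt: "0 < n \<Longrightarrow> fst a < n \<Longrightarrow> atgt n a < n"
  by (simp add: atgt_def)

lemma vert_PA: "i < n \<Longrightarrow> (vert i :: qpath \<Rightarrow> 'k::field) \<in> PA n"
  unfolding PA_def vert_def by (simp, simp add: bvec_def valid_path_def)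

lemma arrel_PA: "0 < n \<Longrightarrow> fst a < n \<Longrightarrow> (arrel n a :: qpath \<Rightarrow> 'k::field) \<in> PA n"
  unfolding PA_def arrel_def by (simp, simp add: bvec_def valid_path_def asrc_lt)

lemma psmult_PA: "f \<in> PA n \<Longrightarrow> psmult c f \<in> PA n"
proof -
  assume f: "f \<in> PA n"
  have "supp (psmult c f) \<subseteq> supp f" by (auto simp: supp_def psmult_def)
  then show ?thesis using f by (auto simp: PA_def psmult_def intro: finite_subset)
qed

lemma padd_PA: "f \<in> PA n \<Longrightarrow> h \<in> PA n \<Longrightarrow> padd f h \<in> PA n"
proof -
  assume f: "f \<in> PA n" and h: "h \<in> PA n"
  have "supp (padd f h) \<subseteq> supp f \<union> supp h" by (auto simp: supp_def padd_def)
  moreover have "\<forall>p. padd f h p \<noteq> 0 \<longrightarrow> valid_path n p"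
    using f h by (auto simp: PA_def padd_def) (metis add.left_neutral)
  ultimately show ?thesis using f h by (auto simp: PA_def intro: finite_subset)
qed

lemma restr_PA: "f \<in> PA n \<Longrightarrow> (\<lambda>w. if P w then f w else 0) \<in> PA n"
proof -
  assume f: "f \<in> PA n"
  have "supp (\<lambda>w. if P w then f w else 0) \<subseteq> supp f" by (auto simp: supp_def)
  then show ?thesis using f by (auto simp: PA_def intro: finite_subset)
qed

lemma psmult_bvec_eq:
  assumes "\<forall>w. f w \<noteq> 0 \<longrightarrow> w = p"
  shows "f = psmult (f p) (bvec p)"
  using assms by (auto simp: psmult_def bvec_def fun_eq_iff)

lemma valid_short:
  assumes "valid_path n w" "length (snd w) \<le> 1"
  shows "snd w = [] \<or> (\<exists>b. snd w = [b] \<and> fst b < n \<and> asrc n b = fst w \<and> ptgt n w = atgt n b)"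
proof (cases "snd w")
  case Nil then show ?thesis by simp
next
  case (Cons b bs)
  then have "bs = []" using assms(2) by simp
  then show ?thesis using Cons assms(1) by (cases w) (auto simp: valid_path_def)
qed

locale qa =
  fixes n :: nat and lam :: "'k::field" and r m :: nat
    and G X :: "(qpath \<Rightarrow> 'k) \<Rightarrow> (qpath \<Rightarrow> 'k)" and d :: nat and mu mus :: "nat \<Rightarrow> 'k"
  assumes n_ge: "3 \<le> n" and lam_nz: "lam \<noteq> 0"
    and action: "taft_module_algebra n lam r m G X"
    and G_len: "\<forall>l. \<forall>f\<in>plen n l. G f \<in> plen n l"
    and X_vert: "\<forall>i<n. X (vert i) \<in> plen n 0"
    and X_arr: "\<forall>i<n. \<forall>b. X (arrel n (i, b)) \<in> ple1 n"
    and d_pos: "0 < d" and d_lt: "d < n"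
    and mu_nz: "\<forall>i<n. mu i \<noteq> 0 \<and> mus i \<noteq> 0"
    and G_vert: "\<forall>i<n. G (vert i) = vert ((i + d) mod n)"
    and G_a: "\<forall>i<n. G (arrA n i) = psmult (mu i) (arrA n ((i + d) mod n))"
    and G_as: "\<forall>i<n. G (arrS n i) = psmult (mus i) (arrS n ((i + d) mod n))"
begin

lemma n_pos: "0 < n" using n_ge by simp

lemma G_PA: "f \<in> PA n \<Longrightarrow> G f \<in> PA n" using action by (simp add: taft_module_algebra_def)
lemma X_PA: "f \<in> PA n \<Longrightarrow> X f \<in> PA n" using action by (simp add: taft_module_algebra_def)
lemma G_smult: "f \<in> PA n \<Longrightarrow> G (psmult c f) = psmult c (G f)" using action by (simp add: taft_module_algebra_def)
lemma X_smult: "f \<in> PA n \<Longrightarrow> X (psmult c f) = psmult c (X f)" using action by (simp add: taft_module_algebra_def)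
lemma G_add: "f \<in> PA n \<Longrightarrow> h \<in> PA n \<Longrightarrow> G (padd f h) = padd (G f) (G h)" using action by (simp add: taft_module_algebra_def)
lemma GX: "f \<in> PA n \<Longrightarrow> G (X f) = psmult lam (X (G f))" using action by (simp add: taft_module_algebra_def)
lemma G_mul: "f \<in> PA n \<Longrightarrow> h \<in> PA n \<Longrightarrow> G (pmul n f h) = pmul n (G f) (G h)"
  using action by (simp add: taft_module_algebra_def)
lemma X_mul: "f \<in> PA n \<Longrightarrow> h \<in> PA n \<Longrightarrow> X (pmul n f h) = padd (pmul n f (X h)) (pmul n (X f) (G h))"
  using action by (simp add: taft_module_algebra_def)

lemma X_zero: "X (\<lambda>_. 0) = (\<lambda>_. 0)"
proof -
  have "(\<lambda>_. 0) = psmult 0 (vert 0 :: qpath \<Rightarrow> 'k)" by (simp add: psmult_def)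
  then show ?thesis using X_smult[OF vert_PA[OF n_pos], of 0] by (simp add: psmult_def)
qed

definition V :: "nat \<Rightarrow> qpath \<Rightarrow> 'k" where "V k = X (vert k)"
definition gam :: "nat \<Rightarrow> 'k" where "gam k = V k (k, [])"

lemma V_len0: "k < n \<Longrightarrow> \<forall>p. V k p \<noteq> 0 \<longrightarrow> snd p = []"
  using X_vert by (auto simp: V_def plen_def)

lemma V_PA: "k < n \<Longrightarrow> V k \<in> PA n" using X_vert by (auto simp: V_def plen_def)

lemma shift_ne: "k < n \<Longrightarrow> (k + d) mod n \<noteq> k"
  using ar_self[of k n d] d_pos d_lt by auto

lemma shift_lt: "(k + d) mod n < n" using n_pos by simp

lemma V_supp: assumes k: "k < n" and j: "j \<noteq> k" "j \<noteq> (k + d) mod n" shows "V k (j, []) = 0"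
proof -
  have "pmul n (vert k) (vert k) = (vert k :: qpath \<Rightarrow> 'k)"
    by (rule ext) (simp add: pmul_vert_left vert_app)
  then have eq: "V k = padd (pmul n (vert k) (V k)) (pmul n (V k) (vert ((k + d) mod n)))"
    using X_mul[OF vert_PA[OF k] vert_PA[OF k]] G_vert k by (simp add: V_def)
  have h1: "pmul n (vert k) (V k) (j, []) = 0" using j by (simp add: pmul_vert_left)
  have h2: "pmul n (V k) (vert ((k + d) mod n)) (j, []) = 0" using j by (simp add: pmul_vert_right)
  have "V k (j, []) = padd (pmul n (vert k) (V k)) (pmul n (V k) (vert ((k + d) mod n))) (j, [])"
    by (rule fun_cong[OF eq])
  also have "\<dots> = 0" by (simp add: padd_def h1 h2)
  finally show ?thesis .
qed

lemma V_form: assumes k: "k < n"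
  shows "V k = padd (psmult (gam k) (vert k)) (psmult (V k ((k + d) mod n, [])) (vert ((k + d) mod n)))"
proof (rule ext)
  fix w :: qpath
  obtain j p where w: "w = (j, p)" by (cases w)
  show "V k w = padd (psmult (gam k) (vert k)) (psmult (V k ((k + d) mod n, [])) (vert ((k + d) mod n))) w"
  proof (cases "p = []")
    case False
    then have "V k w = 0" using V_len0[OF k] w by auto
    then show ?thesis using False w by (simp add: padd_def psmult_def vert_app)
  next
    case True
    then show ?thesis using w V_supp[OF k, of j] shift_ne[OF k]
      by (auto simp: padd_def psmult_def vert_app gam_def)
  qed
qed

lemma kappa: assumes j: "j < n" shows "V j ((j + d) mod n, []) = - gam ((j + d) mod n)"
proof -
  let ?j = "(j + d) mod n"
  have jl: "?j < n" by (rule shift_lt)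
  have "pmul n (vert ?j) (vert j) = (\<lambda>_. 0 :: 'k)"
    using shift_ne[OF j] by (auto simp: fun_eq_iff pmul_vert_left vert_app)
  then have "(\<lambda>_. 0) = padd (pmul n (vert ?j) (V j)) (pmul n (V ?j) (vert ?j))"
    using X_mul[OF vert_PA[OF jl] vert_PA[OF j]] G_vert j X_zero by (simp add: V_def)
  then have "0 = pmul n (vert ?j) (V j) (?j, []) + pmul n (V ?j) (vert ?j) (?j, [])"
    by (metis padd_def)
  then show ?thesis by (simp add: pmul_vert_left pmul_vert_right gam_def eq_neg_iff_add_eq_0)
qed

lemma gam_rel: assumes k: "k < n" shows "gam k = lam * gam ((k + d) mod n)"
proof -
  let ?k = "(k + d) mod n"
  let ?kk = "(?k + d) mod n"
  have kl: "?k < n" by (rule shift_lt)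
  have "G (V k) = psmult lam (V ?k)"
    using GX[OF vert_PA[OF k]] G_vert k by (simp add: V_def)
  moreover have "G (V k) = padd (psmult (gam k) (vert ?k)) (psmult (V k (?k, [])) (vert ?kk))"
    apply (subst V_form[OF k])
    apply (subst G_add)
      apply (rule psmult_PA, rule vert_PA[OF k])
     apply (rule psmult_PA, rule vert_PA[OF kl])
    apply (simp add: G_smult vert_PA k kl G_vert)
    done
  ultimately have "psmult lam (V ?k) (?k, []) = padd (psmult (gam k) (vert ?k)) (psmult (V k (?k, [])) (vert ?kk)) (?k, [])"
    by simp
  then show ?thesis using shift_ne[OF kl] by (simp add: psmult_def padd_def vert_app gam_def)
qed

lemma kappa2: assumes k: "k < n" shows "V k ((k + d) mod n, []) = - gam k / lam"
  using kappa[OF k] gam_rel[OF k] lam_nz by simp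

end

lemma alg_aux: "(yv::'k::field) = (if P then yv else 0) + (- gs / lam) * gv \<Longrightarrow> yv = ga + yv \<Longrightarrow> lam \<noteq> 0
  \<Longrightarrow> yv - ga + gs * inverse lam * gv = (if P then yv else 0)"
  by (cases P) (auto simp: field_simps)

context qa begin

definition sh :: "arrow \<Rightarrow> arrow" where "sh a = ((fst a + d) mod n, snd a)"
definition cf :: "arrow \<Rightarrow> 'k" where "cf a = (if snd a then mu (fst a) else mus (fst a))"
definition sig :: "arrow \<Rightarrow> qpath \<Rightarrow> 'k" where "sig a = qtaft_sigma n lam G X a"

lemma cf_nz: "fst a < n \<Longrightarrow> cf a \<noteq> 0" using mu_nz by (simp add: cf_def)

lemma G_arr: assumes "fst a < n" shows "G (arrel n a) = psmult (cf a) (arrel n (sh a))"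
proof -
  obtain i b where a: "a = (i, b)" by (cases a)
  show ?thesis using assms G_a G_as by (cases b) (auto simp: a cf_def sh_def arrA_def arrS_def)
qed

lemma mod_swap1: "(((i::nat) + d) mod n + 1) mod n = ((i + 1) mod n + d) mod n"
proof -
  have "((i + d) mod n + 1) mod n = (i + d + 1) mod n" by (rule mod_add_left_eq)
  moreover have "((i + 1) mod n + d) mod n = (i + 1 + d) mod n" by (rule mod_add_left_eq)
  moreover have "i + d + 1 = i + 1 + d" by simp
  ultimately show ?thesis by simp
qed

lemma asrc_sh: assumes "fst a < n" shows "asrc n (sh a) = (asrc n a + d) mod n"
  using mod_swap1[of "fst a"] by (simp add: asrc_def sh_def)

lemma atgt_sh: assumes "fst a < n" shows "atgt n (sh a) = (atgt n a + d) mod n"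
  using mod_swap1[of "fst a"] by (simp add: atgt_def sh_def)

lemma sh_lt: "fst (sh a) < n" using n_pos by (simp add: sh_def)

lemma sigma_restr: assumes al: "fst a < n"
  shows "sig a = (\<lambda>w. if fst w = asrc n a \<and> ptgt n w = (atgt n a + d) mod n then X (arrel n a) w else 0)"
proof (rule ext)
  fix w :: qpath
  define s where "s = asrc n a"
  define t where "t = atgt n a"
  define t' where "t' = (t + d) mod n"
  define s' where "s' = (s + d) mod n"
  define A where "A = (arrel n a :: qpath \<Rightarrow> 'k)"
  define Y where "Y = X A"
  have sl: "s < n" using asrc_lt[OF n_pos al] by (simp add: s_def)
  have tl: "t < n" using atgt_lt[OF n_pos al] by (simp add: t_def)
  have APA: "A \<in> PA n" using arrel_PA[OF n_pos al] by (simp add: A_def)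
  have E1: "pmul n (vert s) A = A"
    by (rule ext) (simp add: pmul_vert_left A_def arrel_app s_def)
  have E2: "pmul n A (vert t) = A"
    by (rule ext) (simp add: pmul_vert_right A_def arrel_app t_def)
  have Y1: "Y = padd (pmul n (vert s) Y) (pmul n (V s) (G A))"
    using X_mul[OF vert_PA[OF sl] APA] E1 by (simp add: V_def Y_def)
  have Y2: "Y = padd (pmul n A (V t)) (pmul n Y (vert t'))"
    using X_mul[OF APA vert_PA[OF tl]] E2 G_vert tl by (simp add: V_def Y_def t'_def)
  have GA: "G A = psmult (cf a) (arrel n (sh a))" using G_arr[OF al] by (simp add: A_def)
  have "Y w = padd (pmul n (vert s) Y) (pmul n (V s) (G A)) w" by (rule fun_cong[OF Y1])
  then have y1: "Y w = (if fst w = s then Y w else 0) + V s (fst w, []) * G A w"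
    unfolding padd_def pmul_vert_left pmul_left0[OF V_len0[OF sl]] .
  have "Y w = padd (pmul n A (V t)) (pmul n Y (vert t')) w" by (rule fun_cong[OF Y2])
  then have y2: "Y w = A w * V t (ptgt n w, []) + (if ptgt n w = t' then Y w else 0)"
    unfolding padd_def pmul_vert_right pmul_right0[OF V_len0[OF tl]] .
  have GAw: "G A w \<noteq> 0 \<Longrightarrow> fst w = s' \<and> ptgt n w = t'"
    using asrc_sh[OF al] atgt_sh[OF al]
    by (auto simp: GA psmult_def arrel_app s'_def s_def t'_def t_def split: if_splits)
  have Aw: "A w \<noteq> 0 \<Longrightarrow> ptgt n w = t" by (auto simp: A_def arrel_app t_def split: if_splits)
  have a1: "A w * V t (ptgt n w, []) = gam t * A w"
    using Aw by (cases "A w = 0") (auto simp: gam_def)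
  have a2: "V s (fst w, []) * G A w = (- gam s / lam) * G A w"
    using GAw kappa2[OF sl] by (cases "G A w = 0") (auto simp: s'_def)
  have sig: "sig a w = Y w - gam t * A w + gam s * inverse lam * G A w"
    by (simp add: sig_def qtaft_sigma_def qgamma_def gam_def V_def Y_def A_def s_def t_def)
  show "sig a w = (if fst w = asrc n a \<and> ptgt n w = (atgt n a + d) mod n then X (arrel n a) w else 0)"
  proof (cases "ptgt n w = t'")
    case False
    then have "G A w = 0" using GAw by blast
    then show ?thesis using False sig y2 a1 by (simp add: t'_def t_def)
  next
    case True
    have y1': "Y w = (if fst w = s then Y w else 0) + (- gam s / lam) * G A w"
      using y1 unfolding a2 .
    have y2': "Y w = gam t * A w + Y w"
      using y2 unfolding a1 using True by simp
    have "sig a w = (if fst w = s then Y w else 0)"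
      unfolding sig by (rule alg_aux[OF y1' y2' lam_nz])
    then show ?thesis using True by (simp add: Y_def A_def s_def t'_def t_def)
  qed
qed

end

context qa begin

lemma sigma_shift: assumes al: "fst a < n"
  shows "sig (sh a) = psmult (inverse (cf a * lam)) (G (sig a))"
proof -
  define s where "s = asrc n a"
  define t where "t = atgt n a"
  define t' where "t' = (t + d) mod n"
  define s' where "s' = (s + d) mod n"
  define t'' where "t'' = (t' + d) mod n"
  define A where "A = (arrel n a :: qpath \<Rightarrow> 'k)"
  define Y where "Y = X A"
  have sl: "s < n" using asrc_lt[OF n_pos al] by (simp add: s_def)
  have tl': "t' < n" using n_pos by (simp add: t'_def)
  have APA: "A \<in> PA n" using arrel_PA[OF n_pos al] by (simp add: A_def)
  have YPA: "Y \<in> PA n" using X_PA[OF APA] by (simp add: Y_def)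
  have Peq: "pmul n (vert s) Y = (\<lambda>w. if fst w = s then Y w else 0)"
    by (rule ext) (simp add: pmul_vert_left)
  have PPA: "pmul n (vert s) Y \<in> PA n" unfolding Peq by (rule restr_PA[OF YPA])
  have R: "sig a = pmul n (pmul n (vert s) Y) (vert t')"
    by (rule ext) (simp add: sigma_restr[OF al] pmul_vert_left pmul_vert_right Y_def A_def s_def t'_def t_def)
  have GR: "G (sig a) = pmul n (pmul n (vert s') (G Y)) (vert t'')"
    unfolding R G_mul[OF PPA vert_PA[OF tl']] G_mul[OF vert_PA[OF sl] YPA]
    using G_vert sl tl' by (simp add: s'_def t''_def)
  have GA: "G A = psmult (cf a) (arrel n (sh a))" using G_arr[OF al] by (simp add: A_def)
  have A': "arrel n (sh a) = psmult (inverse (cf a)) (G A)"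
    using cf_nz[OF al] by (simp add: GA psmult_def fun_eq_iff)
  have GY: "G Y = psmult lam (X (G A))" using GX[OF APA] by (simp add: Y_def)
  have XGA: "X (G A) = psmult (inverse lam) (G Y)"
    using lam_nz by (simp add: GY psmult_def fun_eq_iff)
  have XA': "X (arrel n (sh a)) = psmult (inverse (cf a) * inverse lam) (G Y)"
    unfolding A' X_smult[OF G_PA[OF APA]] XGA by (simp add: psmult_def fun_eq_iff)
  show ?thesis
  proof (rule ext)
    fix w
    show "sig (sh a) w = psmult (inverse (cf a * lam)) (G (sig a)) w"
      unfolding sigma_restr[OF sh_lt] GR XA' asrc_sh[OF al] atgt_sh[OF al]
      by (simp add: psmult_def pmul_vert_left pmul_vert_right s'_def s_def t''_def t'_def t_def)
  qed
qed

lemma sig_supp: assumes al: "fst a < n" and nz: "sig a w \<noteq> 0"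
  shows "valid_path n w \<and> length (snd w) \<le> 1 \<and> fst w = asrc n a \<and> ptgt n w = (atgt n a + d) mod n"
proof -
  have "X (arrel n a) \<in> ple1 n" using X_arr al by (cases a) auto
  then show ?thesis using nz unfolding sigma_restr[OF al]
    by (cases w) (auto simp: ple1_def PA_def split: if_splits)
qed

lemma sig_single: assumes "\<forall>w. sig a w \<noteq> 0 \<longrightarrow> w = p" shows "sig a = psmult (sig a p) (bvec p)"
  by (rule psmult_bvec_eq[OF assms])

lemma sig_zero: assumes "\<forall>w. sig a w = 0" shows "sig a = (\<lambda>_. 0)"
  using assms by auto

definition bA :: "nat \<Rightarrow> arrow" where "bA i = ((i + n - 1) mod n, False)"
definition bS :: "nat \<Rightarrow> arrow" where "bS i = ((i + 1) mod n, True)"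
definition pth :: "arrow \<Rightarrow> qpath" where "pth b = (asrc n b, [b])"

lemma arrel_pth: "arrel n b = bvec (pth b)" by (simp add: arrel_def pth_def)

lemma pth_bA: "i < n \<Longrightarrow> pth (bA i) = (i, [bA i])"
  using pred_id[OF n_pos] by (simp add: pth_def bA_def asrc_def)

lemma pth_bS: "pth (bS i) = ((i+1) mod n, [bS i])"
  by (simp add: pth_def bS_def asrc_def)

lemma supp_A: assumes i: "i < n" and nz: "sig (i, True) w \<noteq> 0"
  shows "(d = n - 2 \<and> w = pth (bA i)) \<or> (d = n - 1 \<and> w = (i, []))"
proof -
  have h: "valid_path n w" "length (snd w) \<le> 1" "fst w = i" "ptgt n w = ((i + 1) mod n + d) mod n"
    using sig_supp[of "(i,True)" w] i nz by (auto simp: asrc_def atgt_def)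
  from valid_short[OF h(1) h(2)] show ?thesis
  proof
    assume "snd w = []"
    then have w: "w = (i, [])" using h(3) by (cases w) auto
    then show ?thesis using arA_vert[of i n d] h(4) i d_pos d_lt by simp
  next
    assume "\<exists>b. snd w = [b] \<and> fst b < n \<and> asrc n b = fst w \<and> ptgt n w = atgt n b"
    then obtain j c where b: "snd w = [(j,c)]" "j < n" "asrc n (j,c) = i" "ptgt n w = atgt n (j,c)"
      using h(3) by auto
    have w: "w = (i, [(j,c)])" using b h(3) by (cases w) auto
    show ?thesis
    proof (cases c)
      case True
      then show ?thesis using b h ar_self[of "(i+1) mod n" n d] d_pos d_lt n_pos
        by (simp add: asrc_def atgt_def)
    next
      case False
      then have e1: "(j+1) mod n = i" and e2: "j = ((i + 1) mod n + d) mod n" using b h by (simp_all add: asrc_def atgt_def)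
      have cj: "d = n - 2 \<and> j = (i + n - 1) mod n"
        by (rule arA_F[OF b(2) i d_pos d_lt n_ge e1 e2])
      then have dd: "d = n - 2" and jj: "j = (i + n - 1) mod n" by blast+
      have "w = pth (bA i)" using w False jj pth_bA[OF i] by (simp add: bA_def)
      then show ?thesis using dd by simp
    qed
  qed
qed

lemma supp_S: assumes i: "i < n" and nz: "sig (i, False) w \<noteq> 0"
  shows "(d = 2 \<and> w = pth (bS i)) \<or> (d = 1 \<and> w = ((i + 1) mod n, []))"
proof -
  have h: "valid_path n w" "length (snd w) \<le> 1" "fst w = (i + 1) mod n" "ptgt n w = (i + d) mod n"
    using sig_supp[of "(i,False)" w] i nz by (auto simp: asrc_def atgt_def)
  from valid_short[OF h(1) h(2)] show ?thesis
  proof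
    assume "snd w = []"
    then have w: "w = ((i + 1) mod n, [])" using h(3) by (cases w) auto
    then show ?thesis using arS_vert[of i n d] h(4) i d_pos d_lt by simp
  next
    assume "\<exists>b. snd w = [b] \<and> fst b < n \<and> asrc n b = fst w \<and> ptgt n w = atgt n b"
    then obtain j c where b: "snd w = [(j,c)]" "j < n" "asrc n (j,c) = (i + 1) mod n" "ptgt n w = atgt n (j,c)"
      using h(3) by auto
    have w: "w = ((i + 1) mod n, [(j,c)])" using b h(3) by (cases w) auto
    show ?thesis
    proof (cases c)
      case True
      then have "j = (i + 1) mod n" "((i+1) mod n + 1) mod n = (i + d) mod n"
        using b h by (simp_all add: asrc_def atgt_def)
      then have "d = 2" "j = (i + 1) mod n" using arS_T[of i n d] i d_pos d_lt n_ge by simp_all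
      then show ?thesis using w True by (simp add: pth_def asrc_def bS_def)
    next
      case False
      then have "(j+1) mod n = (i+1) mod n" "j = (i + d) mod n" using b h by (simp_all add: asrc_def atgt_def)
      then have "j = i" using arS_F[of i n j] b(2) i by simp
      then show ?thesis using \<open>j = (i + d) mod n\<close> ar_self[of i n d] i d_pos d_lt by simp
    qed
  qed
qed

end

context qa begin

definition tA where "tA i = sig (i, True) (pth (bA i))"
definition sA where "sA i = sig (i, True) (i, [])"
definition tS where "tS i = sig (i, False) (pth (bS i))"
definition uS where "uS i = sig (i, False) ((i + 1) mod n, [])"

lemma shapeA1: assumes "d = n - 2" "i < n" shows "sig (i, True) = psmult (tA i) (arrel n (bA i))"
proof -
  have "\<forall>w. sig (i,True) w \<noteq> 0 \<longrightarrow> w = pth (bA i)" using supp_A[OF assms(2)] assms(1) n_ge by force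
  then show ?thesis unfolding tA_def arrel_pth by (rule sig_single)
qed

lemma shapeA2: assumes "d = n - 1" "i < n" shows "sig (i, True) = psmult (sA i) (vert i)"
proof -
  have "\<forall>w. sig (i,True) w \<noteq> 0 \<longrightarrow> w = (i, [])" using supp_A[OF assms(2)] assms(1) n_ge by force
  then show ?thesis unfolding sA_def vert_def by (rule sig_single)
qed

lemma shapeA3: assumes "d \<noteq> n - 2" "d \<noteq> n - 1" "i < n" shows "sig (i, True) = (\<lambda>_. 0)"
  using supp_A[OF assms(3)] assms(1,2) by (intro sig_zero) blast

lemma shapeS1: assumes "d = 2" "i < n" shows "sig (i, False) = psmult (tS i) (arrel n (bS i))"
proof -
  have "\<forall>w. sig (i,False) w \<noteq> 0 \<longrightarrow> w = pth (bS i)" using supp_S[OF assms(2)] assms(1) by force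
  then show ?thesis unfolding tS_def arrel_pth by (rule sig_single)
qed

lemma shapeS2: assumes "d = 1" "i < n" shows "sig (i, False) = psmult (uS i) (vert ((i + 1) mod n))"
proof -
  have "\<forall>w. sig (i,False) w \<noteq> 0 \<longrightarrow> w = ((i + 1) mod n, [])" using supp_S[OF assms(2)] assms(1) by force
  then show ?thesis unfolding uS_def vert_def by (rule sig_single)
qed

lemma shapeS3: assumes "d \<noteq> 2" "d \<noteq> 1" "i < n" shows "sig (i, False) = (\<lambda>_. 0)"
  using supp_S[OF assms(3)] assms(1,2) by (intro sig_zero) blast

lemma G_ps_arr: assumes b: "fst b < n" shows "G (psmult c (arrel n b)) = psmult (c * cf b) (arrel n (sh b))"
proof -
  have "G (psmult c (arrel n b)) = psmult c (G (arrel n b))" by (rule G_smult[OF arrel_PA[OF n_pos b]])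
  then show ?thesis unfolding G_arr[OF b] by (simp add: psmult_def fun_eq_iff mult.assoc)
qed

lemma G_ps_vert: "j < n \<Longrightarrow> G (psmult c (vert j)) = psmult c (vert ((j + d) mod n))"
  by (simp add: G_smult vert_PA G_vert)

lemma arrel_pth_1: "arrel n b (pth b) = (1::'k)" by (simp add: arrel_pth bvec_def)

lemma recA1: assumes dd: "d = n - 1" and k: "k + 1 < n" shows "sA (k + 1) = lam * mu (k + 1) * sA k"
proof -
  have e: "k + 1 + d = n + k" using dd k by simp
  have shk: "sh (k+1, True) = (k, True)" unfolding sh_def fst_conv snd_conv e using k by simp
  have "sig (k, True) = psmult (inverse (mu (k+1) * lam)) (G (psmult (sA (k+1)) (vert (k+1))))"
    using sigma_shift[of "(k+1, True)", unfolded shk] k shapeA2[OF dd k] by (simp add: shk cf_def)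
  also have "\<dots> = psmult (inverse (mu (k+1) * lam)) (psmult (sA (k+1)) (vert k))"
    using G_ps_vert[OF k] dd k by simp
  finally have "sA k = inverse (mu (k+1) * lam) * sA (k+1)"
    unfolding sA_def by (simp add: psmult_def vert_app)
  then show ?thesis using mu_nz k lam_nz by (simp add: field_simps)
qed

lemma recA2: assumes dd: "d = n - 2" and k: "k + 2 < n" shows "tA (k + 2) = lam * mu (k + 2) * tA k / mus (k + 1)"
proof -
  have e: "k + 2 + d = n + k" using dd k by simp
  have shk: "sh (k+2, True) = (k, True)" unfolding sh_def fst_conv snd_conv e using k by simp
  have e2: "k + 2 + n - 1 = (k + 1) + n" by simp
  have b2: "bA (k+2) = (k+1, False)" unfolding bA_def e2 mod_add_self2 using k by simp
  have e3: "k + 1 + d = k + n - 1" using dd k by simp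
  have shb: "sh (k+1, False) = bA k" unfolding sh_def bA_def fst_conv snd_conv e3 by simp
  have "sig (k, True) = psmult (inverse (mu (k+2) * lam)) (G (psmult (tA (k+2)) (arrel n (k+1, False))))"
    using sigma_shift[of "(k+2, True)", unfolded shk] k shapeA1[OF dd k, unfolded b2] by (simp add: cf_def)
  also have "\<dots> = psmult (inverse (mu (k+2) * lam)) (psmult (tA (k+2) * mus (k+1)) (arrel n (bA k)))"
    using G_ps_arr[of "(k+1, False)"] k shb by (simp add: cf_def)
  finally have "tA k = inverse (mu (k+2) * lam) * (tA (k+2) * mus (k+1))"
    unfolding tA_def by (simp add: psmult_def arrel_pth_1)
  then show ?thesis using mu_nz k lam_nz by (simp add: field_simps)
qed

lemma recS2: assumes dd: "d = 1" and k: "k + 1 < n" shows "uS (k + 1) = inverse (mus k * lam) * uS k"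
proof -
  have shk: "sh (k, False) = (k+1, False)" unfolding sh_def using dd k by simp
  have kk: "(k + 1) mod n = k + 1" using k by simp
  have "sig (k+1, False) = psmult (inverse (mus k * lam)) (G (psmult (uS k) (vert (k+1))))"
    using sigma_shift[of "(k, False)", unfolded shk] k shapeS2[OF dd, of k] kk by (simp add: shk cf_def)
  also have "\<dots> = psmult (inverse (mus k * lam)) (psmult (uS k) (vert ((k + 2) mod n)))"
    using G_ps_vert[OF k] dd k by simp
  finally show ?thesis unfolding uS_def by (simp add: psmult_def vert_app)
qed

lemma recS1: assumes dd: "d = 2" and k: "k + 2 < n" shows "tS (k + 2) = inverse (mus k * lam) * (tS k * mu (k + 1))"
proof -
  have shk: "sh (k, False) = (k+2, False)" unfolding sh_def using dd k by simp
  have b: "bS k = (k+1, True)" using k by (simp add: bS_def)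
  have shb: "sh (k+1, True) = bS (k+2)" unfolding sh_def bS_def using dd k by simp
  have "sig (k+2, False) = psmult (inverse (mus k * lam)) (G (psmult (tS k) (arrel n (k+1, True))))"
    using sigma_shift[of "(k, False)", unfolded shk] k shapeS1[OF dd, of k] b by (simp add: shk cf_def)
  also have "\<dots> = psmult (inverse (mus k * lam)) (psmult (tS k * mu (k+1)) (arrel n (bS (k+2))))"
    using G_ps_arr[of "(k+1, True)"] k shb by (simp add: cf_def)
  finally show ?thesis unfolding tS_def by (simp add: psmult_def arrel_pth_1)
qed

end

context qa begin

lemma cfA1: assumes dd: "d = n - 1" shows "i < n \<Longrightarrow> sA i = lam ^ i * (\<Prod>j=1..i. mu j) * sA 0"
proof (induction i)
  case 0 then show ?case by simp
next
  case (Suc i)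
  then have "sA (i + 1) = lam * mu (i + 1) * sA i" using recA1[OF dd] by simp
  then show ?case using Suc by (simp add: prod.cl_ivl_Suc mult_ac)
qed

lemma cfA2e: assumes dd: "d = n - 2" shows "2 * k < n \<Longrightarrow>
   tA (2 * k) = lam ^ k * (\<Prod>j=1..k. mu (2*j)) / (\<Prod>j=1..k. mus (2*j - 1)) * tA 0"
proof (induction k)
  case 0 then show ?case by simp
next
  case (Suc k)
  have "tA (2 * k + 2) = lam * mu (2 * k + 2) * tA (2 * k) / mus (2 * k + 1)"
    using recA2[OF dd, of "2 * k"] Suc.prems by simp
  then show ?case using Suc by (simp add: prod.cl_ivl_Suc divide_inverse inverse_mult_distrib mult_ac)
qed

lemma cfA2o: assumes dd: "d = n - 2" shows "2 * k + 1 < n \<Longrightarrow>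
   tA (2 * k + 1) = lam ^ k * (\<Prod>j=1..k. mu (2*j + 1)) / (\<Prod>j=1..k. mus (2*j)) * tA 1"
proof (induction k)
  case 0 then show ?case by simp
next
  case (Suc k)
  have "tA (2 * k + 1 + 2) = lam * mu (2 * k + 1 + 2) * tA (2 * k + 1) / mus (2 * k + 1 + 1)"
    using recA2[OF dd, of "2 * k + 1"] Suc.prems by simp
  then show ?case using Suc by (simp add: prod.cl_ivl_Suc divide_inverse inverse_mult_distrib mult_ac)
qed

lemma cfS2: assumes dd: "d = 1" shows "i < n \<Longrightarrow> uS i = inverse (lam ^ i * (\<Prod>j<i. mus j)) * uS 0"
proof (induction i)
  case 0 then show ?case by simp
next
  case (Suc i)
  then have "uS (i + 1) = inverse (mus i * lam) * uS i" using recS2[OF dd] by simp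
  then show ?case using Suc by (simp add: inverse_mult_distrib mult_ac)
qed

lemma cfS1e: assumes dd: "d = 2" shows "2 * k < n \<Longrightarrow>
   tS (2 * k) = inverse (lam ^ k) * (\<Prod>j=1..k. mu (2*j - 1)) / (\<Prod>j<k. mus (2*j)) * tS 0"
proof (induction k)
  case 0 then show ?case by simp
next
  case (Suc k)
  have "tS (2 * k + 2) = inverse (mus (2 * k) * lam) * (tS (2 * k) * mu (2 * k + 1))"
    using recS1[OF dd, of "2 * k"] Suc.prems by simp
  then show ?case using Suc by (simp add: prod.cl_ivl_Suc divide_inverse inverse_mult_distrib mult_ac)
qed

lemma cfS1o: assumes dd: "d = 2" shows "2 * k + 1 < n \<Longrightarrow>
   tS (2 * k + 1) = inverse (lam ^ k) * (\<Prod>j=1..k. mu (2*j)) / (\<Prod>j=1..k. mus (2*j - 1)) * tS 1"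
proof (induction k)
  case 0 then show ?case by simp
next
  case (Suc k)
  have "tS (2 * k + 1 + 2) = inverse (mus (2 * k + 1) * lam) * (tS (2 * k + 1) * mu (2 * k + 1 + 1))"
    using recS1[OF dd, of "2 * k + 1"] Suc.prems by simp
  then show ?case using Suc by (simp add: prod.cl_ivl_Suc divide_inverse inverse_mult_distrib mult_ac)
qed

end

theorem lemma3p1:
  fixes lam :: "'k::field" and r m n d :: nat
    and G X :: "(qpath \<Rightarrow> 'k) \<Rightarrow> (qpath \<Rightarrow> 'k)" and mu mus :: "nat \<Rightarrow> 'k"
  assumes r_gt: "1 < r" and m_pos: "0 < m" and r_dvd: "r dvd m"
    and lam_root: "lam ^ r = 1" and lam_prim: "\<forall>k. 0 < k \<and> k < r \<longrightarrow> lam ^ k \<noteq> 1"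
    and r_char: "of_nat r \<noteq> (0::'k)"
    and n_ge: "3 \<le> n"
    and action: "taft_module_algebra n lam r m G X"
    and G_len: "\<forall>l. \<forall>f\<in>plen n l. G f \<in> plen n l"
    and X_vert: "\<forall>i<n. X (vert i) \<in> plen n 0"
    and X_arr: "\<forall>i<n. \<forall>b. X (arrel n (i, b)) \<in> ple1 n"
    and faithful: "inner_faithful n lam r m G X"
    and d_pos: "0 < d" and d_le: "d \<le> n - 1"
    and mu_nz: "\<forall>i<n. mu i \<noteq> 0 \<and> mus i \<noteq> 0"
    and G_vert: "\<forall>i<n. G (vert i) = vert ((i + d) mod n)"
    and G_a: "\<forall>i<n. G (arrA n i) = psmult (mu i) (arrA n ((i + d) mod n))"
    and G_as: "\<forall>i<n. G (arrS n i) = psmult (mus i) (arrS n ((i + d) mod n))"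
  shows "\<exists>c0 c1 c0s c1s. \<forall>i<n.
     qtaft_sigma n lam G X (i, True) =
       (if d = n - 2 then
          (if even i then
             psmult (lam ^ (i div 2) * (\<Prod>j=1..i div 2. mu (2*j))
                       / (\<Prod>j=1..i div 2. mus (2*j - 1)) * c0) (arrS n ((i + n - 1) mod n))
           else
             psmult (lam ^ ((i - 1) div 2) * (\<Prod>j=1..(i - 1) div 2. mu (2*j + 1))
                       / (\<Prod>j=1..(i - 1) div 2. mus (2*j)) * c1) (arrS n ((i + n - 1) mod n)))
        else if d = n - 1 then
          psmult (lam ^ i * (\<Prod>j=1..i. mu j) * c0) (vert i)
        else (\<lambda>_. 0)) \<and>
     qtaft_sigma n lam G X (i, False) =
       (if d = 2 then
          (if even i then
             psmult (inverse (lam ^ (i div 2)) * (\<Prod>j=1..i div 2. mu (2*j - 1))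
                       / (\<Prod>j<i div 2. mus (2*j)) * c0s) (arrA n ((i + 1) mod n))
           else
             psmult (inverse (lam ^ ((i - 1) div 2)) * (\<Prod>j=1..(i - 1) div 2. mu (2*j))
                       / (\<Prod>j=1..(i - 1) div 2. mus (2*j - 1)) * c1s) (arrA n ((i + 1) mod n)))
        else if d = 1 then
          psmult (inverse (lam ^ i * (\<Prod>j<i. mus j)) * c0s) (vert ((i + 1) mod n))
        else (\<lambda>_. 0))"
proof -
  have lam_nz: "lam \<noteq> 0" using lam_root r_gt by (metis power_0_left zero_less_iff_neq_zero less_trans zero_less_one zero_neq_one)
  have d_lt: "d < n" using d_le n_ge by simp
  interpret Q: qa n lam r m G X d mu mus
    by (unfold_locales) (use n_ge lam_nz action G_len X_vert X_arr d_pos d_lt mu_nz G_vert G_a G_as in auto)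
  define c0 where "c0 = (if d = n - 2 then Q.tA 0 else Q.sA 0)"
  define c1 where "c1 = Q.tA 1"
  define c0s where "c0s = (if d = 2 then Q.tS 0 else Q.uS 0)"
  define c1s where "c1s = Q.tS 1"
  have n2: "n - 2 \<noteq> n - 1" using n_ge by simp
  show ?thesis
  proof (intro exI allI impI conjI)
    fix i assume i: "i < n"
    have arS: "arrS n ((i + n - 1) mod n) = arrel n (Q.bA i)" by (simp add: arrS_def Q.bA_def)
    have arA: "arrA n ((i + 1) mod n) = arrel n (Q.bS i)" by (simp add: arrA_def Q.bS_def)
    show "qtaft_sigma n lam G X (i, True) =
       (if d = n - 2 then
          (if even i then
             psmult (lam ^ (i div 2) * (\<Prod>j=1..i div 2. mu (2*j))
                       / (\<Prod>j=1..i div 2. mus (2*j - 1)) * c0) (arrS n ((i + n - 1) mod n))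
           else
             psmult (lam ^ ((i - 1) div 2) * (\<Prod>j=1..(i - 1) div 2. mu (2*j + 1))
                       / (\<Prod>j=1..(i - 1) div 2. mus (2*j)) * c1) (arrS n ((i + n - 1) mod n)))
        else if d = n - 1 then
          psmult (lam ^ i * (\<Prod>j=1..i. mu j) * c0) (vert i)
        else (\<lambda>_. 0))"
    proof (cases "d = n - 2")
      case dd: True
      have sh: "qtaft_sigma n lam G X (i, True) = psmult (Q.tA i) (arrel n (Q.bA i))"
        using Q.shapeA1[OF dd i] by (simp add: Q.sig_def)
      show ?thesis
      proof (cases "even i")
        case True
        then obtain k where k: "i = 2 * k" by blast
        show ?thesis using sh dd True Q.cfA2e[OF dd, of k] i k unfolding arS by (simp add: c0_def)
      next
        case False
        then obtain k where k: "i = 2 * k + 1" using oddE by blast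
        show ?thesis using sh dd False Q.cfA2o[OF dd, of k] i k unfolding arS by (simp add: c1_def)
      qed
    next
      case nd: False
      show ?thesis
      proof (cases "d = n - 1")
        case dd: True
        have sh: "qtaft_sigma n lam G X (i, True) = psmult (Q.sA i) (vert i)"
          using Q.shapeA2[OF dd i] by (simp add: Q.sig_def)
        show ?thesis using sh nd dd Q.cfA1[OF dd i] by (simp add: c0_def)
      next
        case False
        then show ?thesis using Q.shapeA3[OF nd False i] nd by (simp add: Q.sig_def)
      qed
    qed
    show "qtaft_sigma n lam G X (i, False) =
       (if d = 2 then
          (if even i then
             psmult (inverse (lam ^ (i div 2)) * (\<Prod>j=1..i div 2. mu (2*j - 1))
                       / (\<Prod>j<i div 2. mus (2*j)) * c0s) (arrA n ((i + 1) mod n))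
           else
             psmult (inverse (lam ^ ((i - 1) div 2)) * (\<Prod>j=1..(i - 1) div 2. mu (2*j))
                       / (\<Prod>j=1..(i - 1) div 2. mus (2*j - 1)) * c1s) (arrA n ((i + 1) mod n)))
        else if d = 1 then
          psmult (inverse (lam ^ i * (\<Prod>j<i. mus j)) * c0s) (vert ((i + 1) mod n))
        else (\<lambda>_. 0))"
    proof (cases "d = 2")
      case dd: True
      have sh: "qtaft_sigma n lam G X (i, False) = psmult (Q.tS i) (arrel n (Q.bS i))"
        using Q.shapeS1[OF dd i] by (simp add: Q.sig_def)
      show ?thesis
      proof (cases "even i")
        case True
        then obtain k where k: "i = 2 * k" by blast
        show ?thesis using sh dd True Q.cfS1e[OF dd, of k] i k unfolding arA by (simp add: c0s_def)
      next
        case False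
        then obtain k where k: "i = 2 * k + 1" using oddE by blast
        show ?thesis using sh dd False Q.cfS1o[OF dd, of k] i k unfolding arA by (simp add: c1s_def)
      qed
    next
      case nd: False
      show ?thesis
      proof (cases "d = 1")
        case dd: True
        have sh: "qtaft_sigma n lam G X (i, False) = psmult (Q.uS i) (vert ((i + 1) mod n))"
          using Q.shapeS2[OF dd i] by (simp add: Q.sig_def)
        show ?thesis using sh nd dd Q.cfS2[OF dd i] by (simp add: c0s_def)
      next
        case False
        then show ?thesis using Q.shapeS3[OF nd False i] nd by (simp add: Q.sig_def)
      qed
    qed
  qed
qed

end
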